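(* Let $\{\ket{j}\}_{j=0}^{7}$ be the computational basis of three qubits, where $\ket{j}=\ket{j_1j_2j_3}$ with $j=4j_1+2j_2+j_3$, and let $$\ket{\psi_1}=\frac{1}{2\sqrt{2}}\left(\ket{0}+\ket{1}+\ket{2}+\ket{3}+\ket{4}+\ket{5}+\ket{6}-\ket{7}\right),\qquad \rho_1=\ket{\psi_1}\bra{\psi_1}.$$ Denote by $A_1,B_1,C_1$ the first, second and third qubits of $\rho_1$. Then $$D(B_1C_1|A_1)=D(A_1C_1|B_1)=D(A_1B_1|C_1)=D(C_1|A_1B_1)=D(B_1|A_1C_1)=D(A_1|B_1C_1)=-\tfrac{1}{4}\log\tfrac{1}{4}-\tfrac{3}{4}\log\tfrac{3}{4}\approx 0.81.$$
   Context: Logarithms are base 2, and $S(\sigma)=-\mathrm{Tr}(\sigma\log\sigma)$ is the von Neumann entropy. For a state $\rho_{XY}$ on a bipartite system $X\otimes Y$ (here $X$ and $Y$ are complementary groups of the three qubits), the quantum discord with measurement on $X$ is $$D(Y|X)=\min_{\{E_a\}}\sum_a p_a S(\rho_{Y|a})+S(\rho_X)-S(\rho_{XY}),$$ where the minimum is over all POVMs $\{E_a\}$ on $X$ ($E_a\ge 0$, $\sum_a E_a=I$), $p_a=\mathrm{Tr}((E_a\otimes I)\rho_{XY})$, $\rho_{Y|a}=\mathrm{Tr}_X((E_a\otimes I)\rho_{XY})/p_a$, and $\rho_X,\rho_Y$ are reduced states. For example $D(B_1C_1|A_1)$ is the discord of $\rho_1$ viewed as a state on $A_1\otimes (B_1C_1)$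 with measurement on $A_1$, and $D(C_1|A_1B_1)$ is the discord with measurement on $A_1B_1$. *)

theory Defs
  imports "Jordan_Normal_Form.Matrix" "Jordan_Normal_Form.Char_Poly"
begin

definition eta :: "real \<Rightarrow> real" where
  "eta x = (if x \<le> 0 then 0 else - x * log 2 x)"

(* von Neumann entropy S(A) = - Tr(A log A) = sum over eigenvalues (with algebraic
   multiplicity, i.e. roots of the characteristic polynomial) of -lambda log2 lambda *)
definition vn_entropy :: "complex mat \<Rightarrow> real" where
  "vn_entropy A = (\<Sum>z\<in>{z. poly (char_poly A) z = 0}.
                      real (order z (char_poly A)) * eta (Re z))"

definition psd :: "nat \<Rightarrow> complex mat \<Rightarrow> bool" where
  "psd d E \<longleftrightarrow> E \<in> carrier_mat d d \<and>
     (\<forall>v \<in> carrier_vec d. Im (\<Sum>i<d. \<Sum>j<d. cnj (v $ i) * E $$ (i, j) * v $ j) = 0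
                        \<and> Re (\<Sum>i<d. \<Sum>j<d. cnj (v $ i) * E $$ (i, j) * v $ j) \<ge> 0)"

definition povm :: "nat \<Rightarrow> complex mat list \<Rightarrow> bool" where
  "povm d Es \<longleftrightarrow> (\<forall>E \<in> set Es. psd d E) \<and>
     (\<forall>i<d. \<forall>j<d. (\<Sum>k<length Es. Es ! k $$ (i, j)) = (if i = j then 1 else 0))"

(* Bipartite operators on X \<otimes> Y, basis index (x,y) \<mapsto> x * dY + y *)
definition ptrace_X :: "nat \<Rightarrow> nat \<Rightarrow> complex mat \<Rightarrow> complex mat" where
  "ptrace_X dX dY R = mat dY dY (\<lambda>(y, y'). \<Sum>x<dX. R $$ (x * dY + y, x * dY + y'))"

definition ptrace_Y :: "nat \<Rightarrow> nat \<Rightarrow> complex mat \<Rightarrow> complex mat" where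
  "ptrace_Y dX dY R = mat dX dX (\<lambda>(x, x'). \<Sum>y<dY. R $$ (x * dY + y, x' * dY + y))"

definition tensor_id :: "nat \<Rightarrow> nat \<Rightarrow> complex mat \<Rightarrow> complex mat" where
  "tensor_id dX dY E = mat (dX * dY) (dX * dY)
     (\<lambda>(i, j). if i mod dY = j mod dY then E $$ (i div dY, j div dY) else 0)"

(* p_a S(rho_{Y|a}), taken to be 0 when p_a = 0 *)
definition cond_term :: "nat \<Rightarrow> nat \<Rightarrow> complex mat \<Rightarrow> complex mat \<Rightarrow> real" where
  "cond_term dX dY R E =
     (let M = tensor_id dX dY E * R;
          p = Re (\<Sum>i<dim_row M. M $$ (i, i));
          sig = ptrace_X dX dY M
      in if p = 0 then 0 else p * vn_entropy ((1 / complex_of_real p) \<cdot>\<^sub>m sig))"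

(* quantum discord D(Y|X) of a bipartite state R on X \<otimes> Y, measurement on X;
   the minimum over POVMs is rendered as the infimum *)
definition discord :: "nat \<Rightarrow> nat \<Rightarrow> complex mat \<Rightarrow> real" where
  "discord dX dY R =
     (INF Es \<in> {Es. povm dX Es}. \<Sum>k<length Es. cond_term dX dY R (Es ! k))
       + vn_entropy (ptrace_Y dX dY R) - vn_entropy R"

(* n qubits, qubit k (0-based, k < n) is bit (n-1-k) of a basis index j,
   so qubit 0 is the most significant one: |j> = |j_0 j_1 ... j_{n-1}> *)
definition qbit :: "nat \<Rightarrow> nat \<Rightarrow> nat \<Rightarrow> nat" where
  "qbit n k j = j div 2 ^ (n - 1 - k) mod 2"

(* index of the basis state of the n-qubit system whose qubits at positions qs
   (listed in increasing order) carry the bits of a (first listed = most significant) *)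
definition place :: "nat \<Rightarrow> nat list \<Rightarrow> nat \<Rightarrow> nat" where
  "place n qs a = (\<Sum>k<length qs. (a div 2 ^ (length qs - 1 - k) mod 2) * 2 ^ (n - 1 - qs ! k))"

definition compl_qubits :: "nat \<Rightarrow> nat list \<Rightarrow> nat list" where
  "compl_qubits n xs = filter (\<lambda>k. k \<notin> set xs) [0..<n]"

(* the n-qubit state R viewed as a bipartite state on X \<otimes> Y, X = qubits xs, Y = the rest *)
definition regroup :: "nat \<Rightarrow> nat list \<Rightarrow> complex mat \<Rightarrow> complex mat" where
  "regroup n xs R =
     (let ys = compl_qubits n xs; dY = 2 ^ length ys; d = 2 ^ length xs * dY
      in mat d d (\<lambda>(i, j). R $$ (place n xs (i div dY) + place n ys (i mod dY),
                                 place n xs (j div dY) + place n ys (j mod dY))))"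

(* D(Y|X) for the n-qubit state R, with X = qubits xs (increasing list) measured *)
definition qdiscord :: "nat \<Rightarrow> nat list \<Rightarrow> complex mat \<Rightarrow> real" where
  "qdiscord n xs R = discord (2 ^ length xs) (2 ^ (n - length xs)) (regroup n xs R)"

definition psi1 :: "nat \<Rightarrow> complex" where
  "psi1 j = (if j = 7 then -1 else 1) / complex_of_real (2 * sqrt 2)"

definition rho1 :: "complex mat" where
  "rho1 = mat 8 8 (\<lambda>(i, j). psi1 i * cnj (psi1 j))"

end

theory Submission
  imports Defs "Jordan_Normal_Form.Schur_Decomposition"
begin

definition tr :: "complex mat \<Rightarrow> complex" where
  "tr A = (\<Sum>i<dim_row A. A $$ (i, i))"

lemma tr_similar:
  assumes A: "A \<in> carrier_mat n n" and B: "B \<in> carrier_mat n n"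
    and P: "P \<in> carrier_mat n n" and Q: "Q \<in> carrier_mat n n"
    and QP: "Q * P = 1\<^sub>m n" and AB: "A = P * B * Q"
  shows "tr A = tr B"
proof -
  have "tr A = (\<Sum>i<n. \<Sum>j<n. P $$ (i, j) * (\<Sum>k<n. B $$ (j, k) * Q $$ (k, i)))"
    unfolding tr_def AB using P B Q
    by (auto simp: scalar_prod_def lessThan_atLeast0 intro!: sum.cong)
  also have "\<dots> = (\<Sum>i<n. \<Sum>j<n. \<Sum>k<n. P $$ (i, j) * B $$ (j, k) * Q $$ (k, i))"
    by (simp add: sum_distrib_left mult_ac)
  also have "\<dots> = (\<Sum>j<n. \<Sum>i<n. \<Sum>k<n. P $$ (i, j) * B $$ (j, k) * Q $$ (k, i))"
    by (rule sum.swap)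
  also have "\<dots> = (\<Sum>j<n. \<Sum>k<n. \<Sum>i<n. P $$ (i, j) * B $$ (j, k) * Q $$ (k, i))"
    by (rule sum.cong[OF refl], rule sum.swap)
  also have "\<dots> = (\<Sum>j<n. \<Sum>k<n. B $$ (j, k) * (\<Sum>i<n. Q $$ (k, i) * P $$ (i, j)))"
    by (simp add: sum_distrib_left mult_ac)
  also have "\<dots> = (\<Sum>j<n. \<Sum>k<n. B $$ (j, k) * (Q * P) $$ (k, j))"
    using P Q by (auto simp: scalar_prod_def lessThan_atLeast0 intro!: sum.cong)
  also have "\<dots> = (\<Sum>j<n. \<Sum>k<n. B $$ (j, k) * (if k = j then 1 else 0))"
    unfolding QP by (auto intro!: sum.cong)
  also have "\<dots> = tr B" using B by (simp add: tr_def if_distrib cong: if_cong)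
  finally show ?thesis .
qed

lemma eig_list:
  fixes A :: "complex mat"
  assumes A: "A \<in> carrier_mat n n"
  shows "\<exists>es. char_poly A = (\<Prod>e\<leftarrow>es. [:- e, 1:]) \<and> sum_list es = tr A"
proof -
  obtain es where es: "char_poly A = (\<Prod>e\<leftarrow>es. [:- e, 1:])"
    using char_poly_factorized[OF A] by blast
  obtain B P Q where sd: "schur_decomposition A es = (B, P, Q)"
    by (cases "schur_decomposition A es") auto
  from schur_decomposition[OF A es sd]
  have w: "similar_mat_wit A B P Q" and d: "diag_mat B = es" by auto
  from w A have c: "B \<in> carrier_mat n n" "P \<in> carrier_mat n n" "Q \<in> carrier_mat n n"
    "Q * P = 1\<^sub>m n" "A = P * B * Q"
    unfolding similar_mat_wit_def Let_def by auto
  have "tr A = tr B" by (rule tr_similar[OF A c])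
  also have "tr B = sum_list (diag_mat B)"
    unfolding tr_def diag_mat_def using c(1)
    by (simp add: sum_list_sum_nth atLeast0LessThan)
  finally show ?thesis using es d by auto
qed

lemma order_prod_linear:
  "Polynomial.order z (\<Prod>e\<leftarrow>es. [:- e, 1:]) = count_list es (z::complex)"
proof (induction es)
  case Nil then show ?case by simp
next
  case (Cons e es)
  have l: "\<And>e. [:- e, 1:] \<noteq> (0 :: complex poly)" by simp
  have nz: "(\<Prod>e\<leftarrow>es. [:- e, 1:]) \<noteq> (0 :: complex poly)"
  proof -
    have "0 \<notin> set (map (\<lambda>e. [:- e, 1:]) es)" using l by auto
    then show ?thesis by (metis prod_list_zero_iff)
  qed
  have "[:- e, 1:] * (\<Prod>e\<leftarrow>es. [:- e, 1:]) \<noteq> (0 :: complex poly)"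
    using nz l by (metis mult_eq_0_iff)
  from order_mult[OF this]
  have "Polynomial.order z ([:- e, 1:] * (\<Prod>e\<leftarrow>es. [:- e, 1:])) = Polynomial.order z [:- e, 1:] + Polynomial.order z (\<Prod>e\<leftarrow>es. [:- e, 1:])" .
  moreover have "Polynomial.order z [:- e, 1:] = (if z = e then 1 else 0)"
  proof (cases "z = e")
    case True then show ?thesis using order_power_n_n[of e 1] by simp
  next
    case False then show ?thesis by (simp add: order_0I)
  qed
  ultimately show ?case using Cons by simp
qed

lemma sum_list_count_real:
  "sum_list (map f xs) = (\<Sum>x\<in>set xs. real (count_list xs x) * (f x :: real))"
proof (induction xs)
  case Nil then show ?case by simp
next
  case (Cons a xs)
  show ?case
  proof (cases "a \<in> set xs")
    case True
    have "(\<Sum>x\<in>set xs. real (count_list (a # xs) x) * f x)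
        = (\<Sum>x\<in>set xs. real (count_list xs x) * f x + (if a = x then f x else 0))"
      by (intro sum.cong) (auto simp: algebra_simps)
    also have "\<dots> = (\<Sum>x\<in>set xs. real (count_list xs x) * f x) + f a"
      using True by (simp add: sum.distrib sum.delta sum.delta')
    finally show ?thesis using True Cons by (simp add: insert_absorb)
  next
    case False
    have "(\<Sum>x\<in>set xs. real (count_list (a # xs) x) * f x)
        = (\<Sum>x\<in>set xs. real (count_list xs x) * f x)"
      using False by (auto intro!: sum.cong)
    moreover have "count_list xs a = 0" using False by (simp add: count_list_0_iff)
    ultimately show ?thesis using False Cons by simp
  qed
qed

lemma vn_list:
  assumes "char_poly A = (\<Prod>e\<leftarrow>es. [:- e, 1:])"
  shows "vn_entropy A = sum_list (map (\<lambda>e. eta (Re e)) es)"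
proof -
  have r: "{z. poly (char_poly A) z = 0} = set es"
    unfolding assms by (auto simp: poly_prod_list prod_list_zero_iff)
  show ?thesis
    unfolding vn_entropy_def r sum_list_count_real
    unfolding assms order_prod_linear by simp
qed


lemma Re_sum_list: "Re (sum_list xs) = sum_list (map Re xs)"
  by (induction xs) auto

lemma psd_eig:
  assumes P: "psd n A" and ev: "eigenvalue A z"
  shows "Im z = 0 \<and> 0 \<le> Re z"
proof -
  have A: "A \<in> carrier_mat n n" using P unfolding psd_def by auto
  obtain v where ev': "eigenvector A v z" using ev unfolding eigenvalue_def by auto
  then have v: "v \<in> carrier_vec n" and v0: "v \<noteq> 0\<^sub>v n" and Av: "A *\<^sub>v v = z \<cdot>\<^sub>v v"
    using A unfolding eigenvector_def by auto
  define q where "q = (\<Sum>i<n. \<Sum>j<n. cnj (v $ i) * A $$ (i, j) * v $ j)"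
  define sr where "sr = (\<Sum>i<n. (cmod (v $ i))^2)"
  have qp: "Im q = 0 \<and> Re q \<ge> 0" using P v unfolding psd_def q_def by auto
  have "q = (\<Sum>i<n. cnj (v $ i) * (A *\<^sub>v v) $ i)"
    unfolding q_def using A v
    by (auto simp: scalar_prod_def sum_distrib_left mult_ac lessThan_atLeast0 intro!: sum.cong)
  also have "\<dots> = (\<Sum>i<n. z * (cnj (v $ i) * v $ i))"
    unfolding Av using v by (auto intro!: sum.cong)
  also have "\<dots> = z * complex_of_real sr"
  proof -
    have pw: "\<And>x. cnj x * x = complex_of_real ((cmod x)^2)"
      using complex_norm_square by (metis mult.commute)
    show ?thesis unfolding sr_def by (simp only: pw of_real_sum sum_distrib_left)
  qed
  finally have qz: "q = z * complex_of_real sr" .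
  obtain i where i: "i < n" "v $ i \<noteq> 0"
  proof -
    { assume "\<forall>i<n. v $ i = 0"
      then have "v = 0\<^sub>v n" using v by (intro eq_vecI) auto
      with v0 have False by simp }
    then show ?thesis using that by blast
  qed
  have "(cmod (v $ i))^2 \<le> sr" unfolding sr_def
    by (rule member_le_sum) (use i in auto)
  moreover have "(cmod (v $ i))^2 > 0" using i by simp
  ultimately have sr: "sr > 0" by linarith
  have "z = q / complex_of_real sr" using qz sr by (simp add: field_simps)
  then show ?thesis using qp sr by (simp add: Re_divide_of_real Im_divide_of_real)
qed

lemma spec_bounds:
  assumes P: "psd n A" and t: "tr A = 1"
    and es: "char_poly A = (\<Prod>e\<leftarrow>es. [:- e, 1:])" and s: "sum_list es = tr A"
    and e: "e \<in> set es"
  shows "Im e = 0 \<and> 0 \<le> Re e \<and> Re e \<le> 1"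
proof -
  have A: "A \<in> carrier_mat n n" using P unfolding psd_def by auto
  have ev: "\<And>e. e \<in> set es \<Longrightarrow> eigenvalue A e"
    unfolding eigenvalue_root_char_poly[OF A] es
    by (auto simp: poly_prod_list prod_list_zero_iff)
  have nn: "\<forall>x\<in>set (map Re es). 0 \<le> x" using psd_eig[OF P ev] by auto
  have "Re e \<le> sum_list (map Re es)"
    by (rule member_le_sum_list) (use e nn in auto)
  also have "\<dots> = 1" using s t by (metis Re_sum_list one_complex.sel(1))
  finally show ?thesis using psd_eig[OF P ev[OF e]] by auto
qed

lemma eta_nonneg: "x \<le> 1 \<Longrightarrow> 0 \<le> eta x"
  unfolding eta_def by (auto simp: mult_nonneg_nonpos)

lemma vn_nonneg:
  assumes P: "psd n A" and t: "tr A = 1"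
  shows "0 \<le> vn_entropy A"
proof -
  have A: "A \<in> carrier_mat n n" using P unfolding psd_def by auto
  obtain es where es: "char_poly A = (\<Prod>e\<leftarrow>es. [:- e, 1:])" and s: "sum_list es = tr A"
    using eig_list[OF A] by blast
  show ?thesis unfolding vn_list[OF es]
    by (rule sum_list_nonneg) (use spec_bounds[OF P t es s] eta_nonneg in auto)
qed

lemma mset_split:
  assumes "distinct ls" "set ls \<subseteq> set rs"
  shows "\<exists>rest. mset rs = mset ls + mset rest"
  using assms
proof (induction ls arbitrary: rs)
  case Nil then show ?case by auto
next
  case (Cons l ls)
  have "set ls \<subseteq> set (remove1 l rs)"
  proof
    fix x assume x: "x \<in> set ls"
    then have "x \<noteq> l" "x \<in> set rs" using Cons.prems by auto
    then show "x \<in> set (remove1 l rs)" by (simp add: in_set_remove1)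
  qed
  then obtain rest where r: "mset (remove1 l rs) = mset ls + mset rest"
    using Cons.IH Cons.prems(1) by (meson distinct.simps(2))
  have "l \<in> set rs" using Cons.prems by auto
  then have "mset rs = add_mset l (mset (remove1 l rs))" by simp
  then show ?case using r by auto
qed

lemma vn_spec:
  assumes P: "psd n A" and t: "tr A = 1" and d: "distinct ls"
    and ev: "\<forall>l\<in>set ls. eigenvalue A (complex_of_real l)" and sl: "sum_list ls = 1"
  shows "vn_entropy A = sum_list (map eta ls)"
proof -
  have A: "A \<in> carrier_mat n n" using P unfolding psd_def by auto
  obtain es where es: "char_poly A = (\<Prod>e\<leftarrow>es. [:- e, 1:])" and s: "sum_list es = tr A"
    using eig_list[OF A] by blast
  note b = spec_bounds[OF P t es s]
  define rs where "rs = map Re es"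
  have "set ls \<subseteq> set rs"
  proof
    fix l assume "l \<in> set ls"
    then have "poly (char_poly A) (complex_of_real l) = 0"
      using ev eigenvalue_root_char_poly[OF A] by auto
    then have "complex_of_real l \<in> set es"
      unfolding es by (auto simp: poly_prod_list prod_list_zero_iff)
    then show "l \<in> set rs" unfolding rs_def by force
  qed
  then obtain rest where r: "mset rs = mset ls + mset rest" using mset_split[OF d] by blast
  have sumeq: "\<And>g. sum_list (map g rs) = sum_list (map g ls) + sum_list (map (g :: real \<Rightarrow> real) rest)"
  proof -
    fix g :: "real \<Rightarrow> real"
    have "mset (map g rs) = mset (map g ls) + mset (map g rest)" using r by simp
    then have "sum_mset (mset (map g rs)) = sum_mset (mset (map g ls)) + sum_mset (mset (map g rest))"
      by simp
    then show "sum_list (map g rs) = sum_list (map g ls) + sum_list (map g rest)"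
      by (simp only: sum_mset_sum_list)
  qed
  have srs: "sum_list rs = 1" unfolding rs_def using s t by (metis Re_sum_list one_complex.sel(1))
  have rest_sub: "set rest \<subseteq> set rs" using r by (metis set_mset_mset set_mset_union Un_upper2)
  have nn: "\<forall>x\<in>set rest. 0 \<le> x" using rest_sub b unfolding rs_def by auto
  have sr0: "sum_list rest = 0" using sumeq[of id] srs sl by simp
  have z: "\<forall>x\<in>set rest. x = 0"
  proof
    fix x assume x: "x \<in> set rest"
    have "x \<le> sum_list rest" using member_le_sum_list[OF x] nn by auto
    then show "x = 0" using nn x sr0 by force
  qed
  have "sum_list (map eta rest) = 0" using z by (induction rest) (auto simp: eta_def)
  moreover have "vn_entropy A = sum_list (map eta rs)" unfolding vn_list[OF es] rs_def by (simp add: o_def)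
  ultimately show ?thesis using sumeq[of eta] by simp
qed


lemma sum_shift_lt: "sum g {a..<a+k} = (\<Sum>y<k. g (a + y))" for a k :: nat
  by (induction k) (auto simp: add.assoc[symmetric])

lemma split_sum:
  fixes f :: "nat \<Rightarrow> 'a::comm_monoid_add"
  shows "(\<Sum>k<dX*dY. f k) = (\<Sum>x<dX. \<Sum>y<dY. f (x*dY + y))"
  using sum.nat_group[of f dY dX, symmetric]
  by (simp add: sum_shift_lt mult.commute)

lemma sum4_swap:
  "(\<Sum>a\<in>A. \<Sum>b\<in>B. \<Sum>c\<in>C. \<Sum>d\<in>D. f a b c d) = (\<Sum>c\<in>C. \<Sum>d\<in>D. \<Sum>a\<in>A. \<Sum>b\<in>B. f a b c d)"
proof -
  have "(\<Sum>a\<in>A. \<Sum>b\<in>B. \<Sum>c\<in>C. \<Sum>d\<in>D. f a b c d) = (\<Sum>a\<in>A. \<Sum>c\<in>C. \<Sum>b\<in>B. \<Sum>d\<in>D. f a b c d)"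
    by (rule sum.cong[OF refl], rule sum.swap)
  also have "\<dots> = (\<Sum>a\<in>A. \<Sum>c\<in>C. \<Sum>d\<in>D. \<Sum>b\<in>B. f a b c d)"
    by (rule sum.cong[OF refl], rule sum.cong[OF refl], rule sum.swap)
  also have "\<dots> = (\<Sum>c\<in>C. \<Sum>a\<in>A. \<Sum>d\<in>D. \<Sum>b\<in>B. f a b c d)"
    by (rule sum.swap)
  also have "\<dots> = (\<Sum>c\<in>C. \<Sum>d\<in>D. \<Sum>a\<in>A. \<Sum>b\<in>B. f a b c d)"
    by (rule sum.cong[OF refl], rule sum.swap)
  finally show ?thesis .
qed

definition outer :: "nat \<Rightarrow> (nat \<Rightarrow> complex) \<Rightarrow> complex mat" where
  "outer n \<phi> = mat n n (\<lambda>(i, j). \<phi> i * cnj (\<phi> j))"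

lemma M_entry:
  assumes E: "E \<in> carrier_mat dX dX" and i: "i < dX*dY" and j: "j < dX*dY"
  shows "(tensor_id dX dY E * outer (dX*dY) \<phi>) $$ (i, j)
       = (\<Sum>x'<dX. E $$ (i div dY, x') * \<phi> (x'*dY + i mod dY)) * cnj (\<phi> j)"
proof -
  have dY: "dY > 0" using i by (cases dY) auto
  have "(tensor_id dX dY E * outer (dX*dY) \<phi>) $$ (i, j)
     = (\<Sum>k<dX*dY. (if i mod dY = k mod dY then E $$ (i div dY, k div dY) else 0) * (\<phi> k * cnj (\<phi> j)))"
    using i j by (simp add: tensor_id_def outer_def scalar_prod_def lessThan_atLeast0)
  also have "\<dots> = (\<Sum>x'<dX. \<Sum>y<dY. (if i mod dY = y then E $$ (i div dY, x') * (\<phi> (x'*dY+y) * cnj (\<phi> j)) else 0))"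
    unfolding split_sum by (rule sum.cong[OF refl], rule sum.cong[OF refl]) simp
  also have "\<dots> = (\<Sum>x'<dX. E $$ (i div dY, x') * (\<phi> (x'*dY + i mod dY) * cnj (\<phi> j)))"
    using dY by (simp add: sum.delta sum.delta')
  finally show ?thesis by (simp add: sum_distrib_right sum_distrib_left mult_ac)
qed

lemma sig_entry:
  assumes E: "E \<in> carrier_mat dX dX" and y: "y < dY" and y': "y' < dY"
  shows "ptrace_X dX dY (tensor_id dX dY E * outer (dX*dY) \<phi>) $$ (y, y')
       = (\<Sum>x<dX. \<Sum>x'<dX. E $$ (x, x') * \<phi> (x'*dY + y) * cnj (\<phi> (x*dY + y')))"
proof -
  have lt: "\<And>x z. x < dX \<Longrightarrow> z < dY \<Longrightarrow> x*dY + z < dX*dY"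
  proof -
    fix x z assume "x < dX" "z < dY"
    then have "x*dY + z < x*dY + dY" by simp
    also have "\<dots> = (x+1)*dY" by simp
    also have "\<dots> \<le> dX*dY" using \<open>x < dX\<close> by (intro mult_right_mono) auto
    finally show "x*dY + z < dX*dY" .
  qed
  show ?thesis
    unfolding ptrace_X_def using y y'
    by (auto simp: M_entry[OF E] lt sum_distrib_right sum_distrib_left mult_ac intro!: sum.cong)
qed


definition qf :: "nat \<Rightarrow> complex mat \<Rightarrow> complex vec \<Rightarrow> complex" where
  "qf n A v = (\<Sum>i<n. \<Sum>j<n. cnj (v $ i) * A $$ (i, j) * v $ j)"

lemma psd_qf: "psd n A \<longleftrightarrow> A \<in> carrier_mat n n \<and> (\<forall>v\<in>carrier_vec n. Im (qf n A v) = 0 \<and> Re (qf n A v) \<ge> 0)"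
  unfolding psd_def qf_def ..

lemma sig_qf:
  assumes E: "E \<in> carrier_mat dX dX" and v: "v \<in> carrier_vec dY"
  shows "qf dY (ptrace_X dX dY (tensor_id dX dY E * outer (dX*dY) \<phi>)) v
       = qf dX E (vec dX (\<lambda>x. \<Sum>y<dY. cnj (v $ y) * \<phi> (x*dY + y)))"
proof -
  define G where "G x x' y y' = cnj (v $ y) * \<phi> (x'*dY+y) * E $$ (x, x') * (v $ y' * cnj (\<phi> (x*dY+y')))" for x x' y y'
  have "qf dY (ptrace_X dX dY (tensor_id dX dY E * outer (dX*dY) \<phi>)) v
     = (\<Sum>y<dY. \<Sum>y'<dY. cnj (v $ y) * (\<Sum>x<dX. \<Sum>x'<dX. E $$ (x, x') * \<phi> (x'*dY + y) * cnj (\<phi> (x*dY + y'))) * v $ y')"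
    unfolding qf_def by (auto simp: sig_entry[OF E] intro!: sum.cong)
  also have "\<dots> = (\<Sum>y<dY. \<Sum>y'<dY. \<Sum>x<dX. \<Sum>x'<dX. G x x' y y')"
    unfolding G_def by (simp add: sum_distrib_left sum_distrib_right mult_ac)
  also have "\<dots> = (\<Sum>x<dX. \<Sum>x'<dX. \<Sum>y<dY. \<Sum>y'<dY. G x x' y y')"
    by (rule sum4_swap)
  also have "\<dots> = (\<Sum>x<dX. \<Sum>x'<dX. \<Sum>y'<dY. \<Sum>y<dY. G x x' y y')"
    by (rule sum.cong[OF refl], rule sum.cong[OF refl], rule sum.swap)
  also have "\<dots> = qf dX E (vec dX (\<lambda>x. \<Sum>y<dY. cnj (v $ y) * \<phi> (x*dY + y)))"
    unfolding qf_def G_def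
    by (auto simp: cnj_sum sum_distrib_left sum_distrib_right mult_ac intro!: sum.cong)
  finally show ?thesis .
qed

lemma sig_psd:
  assumes E: "psd dX E"
  shows "psd dY (ptrace_X dX dY (tensor_id dX dY E * outer (dX*dY) \<phi>))"
proof -
  have Ec: "E \<in> carrier_mat dX dX" using E unfolding psd_def by auto
  show ?thesis unfolding psd_qf
  proof (intro conjI ballI)
    show "ptrace_X dX dY (tensor_id dX dY E * outer (dX * dY) \<phi>) \<in> carrier_mat dY dY"
      unfolding ptrace_X_def by simp
  next
    fix v :: "complex vec" assume v: "v \<in> carrier_vec dY"
    have "vec dX (\<lambda>x. \<Sum>y<dY. cnj (v $ y) * \<phi> (x*dY + y)) \<in> carrier_vec dX" by simp
    then show "Im (qf dY (ptrace_X dX dY (tensor_id dX dY E * outer (dX * dY) \<phi>)) v) = 0"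
      "0 \<le> Re (qf dY (ptrace_X dX dY (tensor_id dX dY E * outer (dX * dY) \<phi>)) v)"
      unfolding sig_qf[OF Ec v] using E unfolding psd_qf by auto
  qed
qed

lemma psd_diag:
  assumes P: "psd n A" and i: "i < n"
  shows "Im (A $$ (i, i)) = 0 \<and> 0 \<le> Re (A $$ (i, i))"
proof -
  have r: "\<And>a. a < n \<Longrightarrow> (\<Sum>b<n. cnj (unit_vec n i $ a) * A $$ (a, b) * unit_vec n i $ b)
      = (if a = i then A $$ (i, i) else 0)"
  proof -
    fix a assume a: "a < n"
    have "(\<Sum>b<n. cnj (unit_vec n i $ a) * A $$ (a, b) * unit_vec n i $ b)
        = (\<Sum>b<n. if b = i then cnj (unit_vec n i $ a) * A $$ (a, i) else 0)"
      by (rule sum.cong) (auto simp: unit_vec_def)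
    also have "\<dots> = cnj (unit_vec n i $ a) * A $$ (a, i)" using i by simp
    finally show "(\<Sum>b<n. cnj (unit_vec n i $ a) * A $$ (a, b) * unit_vec n i $ b)
      = (if a = i then A $$ (i, i) else 0)" using a i by simp
  qed
  have "qf n A (unit_vec n i) = (\<Sum>a<n. if a = i then A $$ (i, i) else 0)"
    unfolding qf_def by (rule sum.cong[OF refl], rule r, simp)
  also have "\<dots> = A $$ (i, i)" using i by simp
  finally have "qf n A (unit_vec n i) = A $$ (i, i)" .
  moreover have "unit_vec n i \<in> carrier_vec n" by simp
  ultimately show ?thesis using P unfolding psd_qf by metis
qed

lemma tr_real:
  assumes P: "psd n A"
  shows "tr A = complex_of_real (Re (tr A)) \<and> 0 \<le> Re (tr A)"
proof -
  have A: "A \<in> carrier_mat n n" using P unfolding psd_def by auto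
  have "Im (tr A) = 0" unfolding tr_def using A psd_diag[OF P] by (simp add: Im_sum)
  moreover have "0 \<le> Re (tr A)" unfolding tr_def using A psd_diag[OF P] by (simp add: Re_sum) (rule sum_nonneg, simp)
  ultimately show ?thesis by (simp add: complex_eq_iff)
qed

lemma psd_smult:
  assumes P: "psd n A" and c: "0 \<le> c"
  shows "psd n (complex_of_real c \<cdot>\<^sub>m A)"
proof -
  have A: "A \<in> carrier_mat n n" using P unfolding psd_def by auto
  have "\<And>v. v \<in> carrier_vec n \<Longrightarrow> qf n (complex_of_real c \<cdot>\<^sub>m A) v = complex_of_real c * qf n A v"
    unfolding qf_def using A by (auto simp: sum_distrib_left mult_ac intro!: sum.cong)
  then show ?thesis using P A c unfolding psd_qf by (auto simp: mult_nonneg_nonneg)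
qed

lemma tr_smult: "A \<in> carrier_mat n n \<Longrightarrow> tr (c \<cdot>\<^sub>m A) = c * tr A"
  unfolding tr_def by (simp add: sum_distrib_left)

lemma outer_psd: "psd n (outer n \<phi>)"
  unfolding psd_qf
proof (intro conjI ballI)
  show "outer n \<phi> \<in> carrier_mat n n" unfolding outer_def by simp
next
  fix v :: "complex vec" assume v: "v \<in> carrier_vec n"
  define t where "t = (\<Sum>i<n. cnj (v $ i) * \<phi> i)"
  have "qf n (outer n \<phi>) v = t * cnj t"
    unfolding qf_def outer_def t_def
    apply (simp add: cnj_sum sum_distrib_left sum_distrib_right mult_ac)
    apply (subst sum.swap)
    apply (simp add: mult_ac)
    done
  also have "\<dots> = complex_of_real ((cmod t)^2)" by (rule complex_norm_square[symmetric])
  finally have "qf n (outer n \<phi>) v = complex_of_real ((cmod t)^2)" .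
  then show "Im (qf n (outer n \<phi>) v) = 0" "0 \<le> Re (qf n (outer n \<phi>) v)" by auto
qed

lemma outer_vn0:
  assumes s: "(\<Sum>i<n. (cmod (\<phi> i))^2) = s" and sp: "s > 0"
  shows "vn_entropy (complex_of_real (1/s) \<cdot>\<^sub>m outer n \<phi>) = 0"
proof -
  define A where "A = complex_of_real (1/s) \<cdot>\<^sub>m outer n \<phi>"
  have pw: "\<And>x. x * cnj x = complex_of_real ((cmod x)^2)" by (rule complex_norm_square[symmetric])
  have ss: "(\<Sum>i<n. \<phi> i * cnj (\<phi> i)) = complex_of_real s"
    unfolding s[symmetric] pw by simp
  have P: "psd n A" unfolding A_def by (rule psd_smult[OF outer_psd]) (use sp in simp)
  have "tr A = complex_of_real (1/s) * tr (outer n \<phi>)"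
    unfolding A_def by (rule tr_smult[of _ n]) (simp add: outer_def)
  also have "tr (outer n \<phi>) = complex_of_real s" unfolding tr_def outer_def by (simp add: ss)
  finally have t: "tr A = 1" using sp by simp
  have ev: "eigenvalue A (complex_of_real 1)"
    unfolding eigenvalue_def eigenvector_def
  proof (intro exI conjI)
    show "vec n \<phi> \<in> carrier_vec (dim_row A)" unfolding A_def outer_def by simp
    show "vec n \<phi> \<noteq> 0\<^sub>v (dim_row A)"
    proof
      assume "vec n \<phi> = 0\<^sub>v (dim_row A)"
      then have "\<forall>i<n. \<phi> i = 0" unfolding A_def outer_def
        by (metis dim_vec index_smult_mat(2) index_vec index_zero_vec(1) dim_row_mat(1))
      then have "s = 0" unfolding s[symmetric] by simp
      with sp show False by simp
    qed
    show "A *\<^sub>v vec n \<phi> = complex_of_real 1 \<cdot>\<^sub>v vec n \<phi>"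
    proof (rule eq_vecI)
      fix i assume "i < dim_vec (complex_of_real 1 \<cdot>\<^sub>v vec n \<phi>)"
      then have i: "i < n" by simp
      have "(A *\<^sub>v vec n \<phi>) $ i = complex_of_real (1/s) * \<phi> i * (\<Sum>j<n. cnj (\<phi> j) * \<phi> j)"
        unfolding A_def outer_def using i
        by (simp add: scalar_prod_def sum_distrib_left mult_ac lessThan_atLeast0)
      also have "\<dots> = \<phi> i" using ss sp by (simp add: mult.commute)
      finally show "(A *\<^sub>v vec n \<phi>) $ i = (complex_of_real 1 \<cdot>\<^sub>v vec n \<phi>) $ i" using i by simp
    qed (simp add: A_def outer_def)
  qed
  have "vn_entropy A = sum_list (map eta [1])"
    by (rule vn_spec[OF P t]) (use ev in auto)
  then show ?thesis unfolding A_def by (simp add: eta_def)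
qed


lemma lt_idx: "x < dX \<Longrightarrow> z < dY \<Longrightarrow> x*dY + z < dX*(dY::nat)"
proof -
  assume a: "x < dX" "z < dY"
  then have "x*dY + z < x*dY + dY" by simp
  also have "\<dots> = (x+1)*dY" by simp
  also have "\<dots> \<le> dX*dY" using a by (intro mult_right_mono) auto
  finally show "x*dY + z < dX*dY" .
qed

lemma trM:
  assumes E: "E \<in> carrier_mat dX dX"
  shows "(\<Sum>i<dim_row (tensor_id dX dY E * outer (dX*dY) \<phi>). (tensor_id dX dY E * outer (dX*dY) \<phi>) $$ (i, i))
       = tr (ptrace_X dX dY (tensor_id dX dY E * outer (dX*dY) \<phi>))"
proof -
  let ?M = "tensor_id dX dY E * outer (dX*dY) \<phi>"
  have "(\<Sum>i<dim_row ?M. ?M $$ (i, i)) = (\<Sum>x<dX. \<Sum>y<dY. ?M $$ (x*dY+y, x*dY+y))"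
    by (simp add: tensor_id_def split_sum)
  also have "\<dots> = (\<Sum>y<dY. \<Sum>x<dX. ?M $$ (x*dY+y, x*dY+y))" by (rule sum.swap)
  also have "\<dots> = tr (ptrace_X dX dY ?M)" by (simp add: tr_def ptrace_X_def)
  finally show ?thesis .
qed

lemma inv_of_real: "1 / complex_of_real p = complex_of_real (1 / p)"
  by simp

lemma cond_nonneg:
  assumes E: "psd dX E"
  shows "0 \<le> cond_term dX dY (outer (dX*dY) \<phi>) E"
proof -
  have Ec: "E \<in> carrier_mat dX dX" using E unfolding psd_def by auto
  define sig where "sig = ptrace_X dX dY (tensor_id dX dY E * outer (dX*dY) \<phi>)"
  have Ps: "psd dY sig" unfolding sig_def by (rule sig_psd[OF E])
  have sc: "sig \<in> carrier_mat dY dY" using Ps unfolding psd_def by auto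
  define p where "p = Re (tr sig)"
  have tp: "tr sig = complex_of_real p" "0 \<le> p" using tr_real[OF Ps] unfolding p_def by auto
  have ct: "cond_term dX dY (outer (dX*dY) \<phi>) E
      = (if p = 0 then 0 else p * vn_entropy (complex_of_real (1/p) \<cdot>\<^sub>m sig))"
    unfolding cond_term_def Let_def trM[OF Ec] sig_def[symmetric] p_def[symmetric] inv_of_real ..
  show ?thesis
  proof (cases "p = 0")
    case True then show ?thesis unfolding ct by simp
  next
    case False
    then have pp: "p > 0" using tp by simp
    have P1: "psd dY (complex_of_real (1/p) \<cdot>\<^sub>m sig)" by (rule psd_smult[OF Ps]) (use pp in simp)
    have "tr (complex_of_real (1/p) \<cdot>\<^sub>m sig) = complex_of_real (1/p) * tr sig"
      by (rule tr_smult[OF sc])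
    also have "\<dots> = 1" using tp pp by simp
    finally have "0 \<le> vn_entropy (complex_of_real (1/p) \<cdot>\<^sub>m sig)" by (rule vn_nonneg[OF P1])
    then show ?thesis unfolding ct using pp by simp
  qed
qed

definition Eb :: "nat \<Rightarrow> nat \<Rightarrow> complex mat" where
  "Eb d a = outer d (\<lambda>i. if i = a then 1 else 0)"

lemma cond_zero:
  assumes a: "a < dX"
  shows "cond_term dX dY (outer (dX*dY) \<phi>) (Eb dX a) = 0"
proof -
  have Ec: "Eb dX a \<in> carrier_mat dX dX" unfolding Eb_def outer_def by simp
  define sig where "sig = ptrace_X dX dY (tensor_id dX dY (Eb dX a) * outer (dX*dY) \<phi>)"
  define \<psi> where "\<psi> y = \<phi> (a*dY + y)" for y
  have sig: "sig = outer dY \<psi>"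
  proof (rule eq_matI)
    fix y y' assume "y < dim_row (outer dY \<psi>)" "y' < dim_col (outer dY \<psi>)"
    then have y: "y < dY" "y' < dY" unfolding outer_def by auto
    have "sig $$ (y, y') = (\<Sum>x<dX. \<Sum>x'<dX. Eb dX a $$ (x, x') * \<phi> (x'*dY + y) * cnj (\<phi> (x*dY + y')))"
      unfolding sig_def by (rule sig_entry[OF Ec y])
    also have "\<dots> = (\<Sum>x<dX. if x = a then \<phi> (a*dY + y) * cnj (\<phi> (x*dY + y')) else 0)"
    proof (rule sum.cong[OF refl])
      fix x assume x: "x \<in> {..<dX}"
      have "(\<Sum>x'<dX. Eb dX a $$ (x, x') * \<phi> (x'*dY + y) * cnj (\<phi> (x*dY + y')))
          = (\<Sum>x'<dX. if x' = a then (if x = a then \<phi> (a*dY + y) * cnj (\<phi> (x*dY + y')) else 0) else 0)"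
        by (rule sum.cong) (use x in \<open>auto simp: Eb_def outer_def\<close>)
      also have "\<dots> = (if x = a then \<phi> (a*dY + y) * cnj (\<phi> (x*dY + y')) else 0)" using a by simp
      finally show "(\<Sum>x'<dX. Eb dX a $$ (x, x') * \<phi> (x'*dY + y) * cnj (\<phi> (x*dY + y')))
          = (if x = a then \<phi> (a*dY + y) * cnj (\<phi> (x*dY + y')) else 0)" .
    qed
    also have "\<dots> = \<phi> (a*dY + y) * cnj (\<phi> (a*dY + y'))" using a by simp
    finally show "sig $$ (y, y') = outer dY \<psi> $$ (y, y')" using y unfolding outer_def \<psi>_def by simp
  qed (auto simp: sig_def ptrace_X_def outer_def)
  define p where "p = Re (tr sig)"
  define s where "s = (\<Sum>i<dY. (cmod (\<psi> i))^2)"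
  have pw: "\<And>x. x * cnj x = complex_of_real ((cmod x)^2)" by (rule complex_norm_square[symmetric])
  have "tr sig = complex_of_real s" unfolding sig tr_def outer_def s_def by (simp add: pw)
  then have ps: "p = s" unfolding p_def by simp
  have ct: "cond_term dX dY (outer (dX*dY) \<phi>) (Eb dX a)
      = (if p = 0 then 0 else p * vn_entropy (complex_of_real (1/p) \<cdot>\<^sub>m sig))"
    unfolding cond_term_def Let_def trM[OF Ec] sig_def[symmetric] p_def[symmetric] inv_of_real ..
  have s0: "s \<ge> 0" unfolding s_def by (rule sum_nonneg) simp
  show ?thesis
  proof (cases "p = 0")
    case True then show ?thesis unfolding ct by simp
  next
    case False
    then have "s > 0" using ps s0 by simp
    from outer_vn0[OF s_def[symmetric] this]
    show ?thesis unfolding ct sig ps by simp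
  qed
qed

lemma povm_basis: "povm dX (map (Eb dX) [0..<dX])"
  unfolding povm_def
proof (intro conjI allI impI ballI)
  fix E assume "E \<in> set (map (Eb dX) [0..<dX])"
  then show "psd dX E" unfolding Eb_def using outer_psd by auto
next
  fix i j assume i: "i < dX" and j: "j < dX"
  have "(\<Sum>k<length (map (Eb dX) [0..<dX]). map (Eb dX) [0..<dX] ! k $$ (i, j))
      = (\<Sum>k<dX. if k = i then (if i = j then 1 else 0) else 0)"
    by (rule sum.cong) (use i j in \<open>auto simp: Eb_def outer_def\<close>)
  also have "\<dots> = (if i = j then 1 else 0)" using i by simp
  finally show "(\<Sum>k<length (map (Eb dX) [0..<dX]). map (Eb dX) [0..<dX] ! k $$ (i, j)) = (if i = j then 1 else 0)" .
qed

lemma discord_pure: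
  assumes n: "(\<Sum>i<dX*dY. (cmod (\<phi> i))^2) = 1"
  shows "discord dX dY (outer (dX*dY) \<phi>) = vn_entropy (ptrace_Y dX dY (outer (dX*dY) \<phi>))"
proof -
  let ?f = "\<lambda>Es. \<Sum>k<length Es. cond_term dX dY (outer (dX*dY) \<phi>) (Es ! k)"
  have inf: "(INF Es \<in> {Es. povm dX Es}. ?f Es) = 0"
  proof (rule cInf_eq_minimum)
    have "?f (map (Eb dX) [0..<dX]) = 0"
      by (rule sum.neutral) (auto simp: cond_zero)
    then show "0 \<in> ?f ` {Es. povm dX Es}" using povm_basis by force
  next
    fix x assume "x \<in> ?f ` {Es. povm dX Es}"
    then obtain Es where Es: "povm dX Es" and x: "x = ?f Es" by auto
    show "0 \<le> x" unfolding x
      by (rule sum_nonneg) (use Es in \<open>auto simp: povm_def intro!: cond_nonneg\<close>)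
  qed
  have "vn_entropy (complex_of_real (1/1) \<cdot>\<^sub>m outer (dX*dY) \<phi>) = 0"
    by (rule outer_vn0[OF n]) simp
  moreover have "complex_of_real (1/1) \<cdot>\<^sub>m outer (dX*dY) \<phi> = outer (dX*dY) \<phi>"
    by (rule eq_matI) (auto simp: outer_def)
  ultimately have "vn_entropy (outer (dX*dY) \<phi>) = 0" by simp
  then show ?thesis unfolding discord_def inf by simp
qed


lemma cases8: "(i::nat) < 8 \<Longrightarrow> i = 0 \<or> i = 1 \<or> i = 2 \<or> i = 3 \<or> i = 4 \<or> i = 5 \<or> i = 6 \<or> i = 7"
  by auto




lemma psi1_prod: "psi1 i * cnj (psi1 j) = complex_of_real ((if i = 7 then -1 else 1) * (if j = 7 then -1 else 1) / 8)"
proof -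
  have "psi1 i = complex_of_real ((if i = 7 then -1 else 1) / (2 * sqrt 2))"
    unfolding psi1_def by simp
  moreover have "psi1 j = complex_of_real ((if j = 7 then -1 else 1) / (2 * sqrt 2))"
    unfolding psi1_def by simp
  moreover have "(2 * sqrt 2) * (2 * sqrt 2) = (8::real)" by simp
  ultimately show ?thesis by (simp add: of_real_mult[symmetric] del: of_real_mult)
qed


lemma cases4: "(i::nat) < 4 \<Longrightarrow> i = 0 \<or> i = 1 \<or> i = 2 \<or> i = 3" by auto
lemma cases2: "(i::nat) < 2 \<Longrightarrow> i = 0 \<or> i = 1" by auto

lemma rho1_outer: "rho1 = outer 8 psi1"
  unfolding rho1_def outer_def ..

lemma psi1_sq: "(cmod (psi1 i))^2 = 1/8"
proof -
  have "complex_of_real ((cmod (psi1 i))^2) = complex_of_real (1/8)"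
    unfolding complex_norm_square psi1_prod by simp
  then show ?thesis using of_real_eq_iff by blast
qed

lemma psi1_norm: "(\<Sum>i<d*e. (cmod (psi1 i))^2) = 1" if "d*e = 8" for d e :: nat
  using that by (simp add: psi1_sq)

lemma regroup_rho1:
  assumes dY: "dY = 2 ^ length (compl_qubits 3 xs)" and d: "2 ^ length xs * dY = 8"
    and P: "\<forall>i<8. place 3 xs (i div dY) + place 3 (compl_qubits 3 xs) (i mod dY) < 8 \<and>
       (place 3 xs (i div dY) + place 3 (compl_qubits 3 xs) (i mod dY) = 7 \<longleftrightarrow> i = 7)"
  shows "regroup 3 xs rho1 = rho1"
proof -
  have ps: "\<And>i. i < 8 \<Longrightarrow> psi1 (place 3 xs (i div dY) + place 3 (compl_qubits 3 xs) (i mod dY)) = psi1 i"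
    using P unfolding psi1_def by auto
  show ?thesis
    unfolding regroup_def Let_def dY[symmetric] d
    by (rule eq_matI) (use P ps in \<open>auto simp: rho1_def\<close>)
qed

definition C2 :: "complex mat" where
  "C2 = mat 2 2 (\<lambda>(i, j). if i = j then 1/2 else 1/4)"

definition C4 :: "complex mat" where
  "C4 = mat 4 4 (\<lambda>(i, j). if i < 3 \<and> j < 3 then 1/4 else if i = 3 \<and> j = 3 then 1/4 else 0)"

lemma ptY24: "ptrace_Y 2 4 rho1 = C2"
  unfolding ptrace_Y_def C2_def
  by (rule eq_matI) (auto dest!: cases2 simp: rho1_def psi1_prod lessThan_nat_numeral)

lemma ptY42: "ptrace_Y 4 2 rho1 = C4"
  unfolding ptrace_Y_def C4_def
  by (rule eq_matI) (auto dest!: cases4 simp: rho1_def psi1_prod lessThan_nat_numeral)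


lemma ptY_psd: "psd dX (ptrace_Y dX dY (outer (dX*dY) \<phi>))"
  unfolding psd_qf
proof (intro conjI ballI)
  show "ptrace_Y dX dY (outer (dX*dY) \<phi>) \<in> carrier_mat dX dX" unfolding ptrace_Y_def by simp
next
  fix v :: "complex vec" assume v: "v \<in> carrier_vec dX"
  define t where "t y = (\<Sum>x<dX. cnj (v $ x) * \<phi> (x*dY + y))" for y
  define F where "F x x' y = cnj (v $ x) * \<phi> (x*dY + y) * (v $ x' * cnj (\<phi> (x'*dY + y)))" for x x' y
  have "qf dX (ptrace_Y dX dY (outer (dX*dY) \<phi>)) v = (\<Sum>x<dX. \<Sum>x'<dX. \<Sum>y<dY. F x x' y)"
    unfolding qf_def ptrace_Y_def F_def
    by (auto simp: outer_def lt_idx sum_distrib_left sum_distrib_right mult_ac intro!: sum.cong)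
  also have "\<dots> = (\<Sum>x<dX. \<Sum>y<dY. \<Sum>x'<dX. F x x' y)"
    by (rule sum.cong[OF refl], rule sum.swap)
  also have "\<dots> = (\<Sum>y<dY. \<Sum>x<dX. \<Sum>x'<dX. F x x' y)"
    by (rule sum.swap)
  also have "\<dots> = (\<Sum>y<dY. t y * cnj (t y))"
    unfolding t_def F_def by (simp add: cnj_sum sum_distrib_left sum_distrib_right mult_ac)
  also have "\<dots> = complex_of_real (\<Sum>y<dY. (cmod (t y))^2)"
    by (simp only: of_real_sum complex_norm_square)
  finally have q: "qf dX (ptrace_Y dX dY (outer (dX*dY) \<phi>)) v = complex_of_real (\<Sum>y<dY. (cmod (t y))^2)" .
  show "Im (qf dX (ptrace_Y dX dY (outer (dX*dY) \<phi>)) v) = 0" unfolding q by simp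
  show "0 \<le> Re (qf dX (ptrace_Y dX dY (outer (dX*dY) \<phi>)) v)" unfolding q by (simp add: sum_nonneg)
qed

lemma psd_C2: "psd 2 C2"
  using ptY_psd[where dX=2 and dY=4 and \<phi>=psi1] by (simp add: ptY24[symmetric] rho1_outer)

lemma psd_C4: "psd 4 C4"
  using ptY_psd[where dX=4 and dY=2 and \<phi>=psi1] by (simp add: ptY42[symmetric] rho1_outer)

lemma ev_intro:
  assumes "v \<in> carrier_vec n" "A \<in> carrier_mat n n" "v $ i \<noteq> 0" "i < n" "A *\<^sub>v v = k \<cdot>\<^sub>v v"
  shows "eigenvalue A k"
  unfolding eigenvalue_def eigenvector_def
proof (intro exI conjI)
  show "v \<in> carrier_vec (dim_row A)" using assms by simp
  show "v \<noteq> 0\<^sub>v (dim_row A)" using assms by auto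
  show "A *\<^sub>v v = k \<cdot>\<^sub>v v" by fact
qed

lemma vn_C2: "vn_entropy C2 = eta (3/4) + eta (1/4)"
proof -
  have e1: "eigenvalue C2 (complex_of_real (3/4))"
    by (rule ev_intro[of "vec 2 (\<lambda>_. 1)" 2 _ 0])
       (auto intro!: eq_vecI dest!: cases2 simp: C2_def scalar_prod_def atLeast0LessThan lessThan_nat_numeral)
  have e2: "eigenvalue C2 (complex_of_real (1/4))"
    by (rule ev_intro[of "vec 2 (\<lambda>i. if i = 0 then 1 else -1)" 2 _ 0])
       (auto intro!: eq_vecI dest!: cases2 simp: C2_def scalar_prod_def atLeast0LessThan lessThan_nat_numeral)
  have t: "tr C2 = 1" by (simp add: tr_def C2_def lessThan_nat_numeral)
  have "vn_entropy C2 = sum_list (map eta [3/4, 1/4])"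
    by (rule vn_spec[OF psd_C2 t]) (use e1 e2 in auto)
  then show ?thesis by simp
qed

lemma vn_C4: "vn_entropy C4 = eta (3/4) + eta (1/4)"
proof -
  have e1: "eigenvalue C4 (complex_of_real (3/4))"
    by (rule ev_intro[of "vec 4 (\<lambda>i. if i < 3 then 1 else 0)" 4 _ 0])
       (auto intro!: eq_vecI dest!: cases4 simp: C4_def scalar_prod_def atLeast0LessThan lessThan_nat_numeral)
  have e2: "eigenvalue C4 (complex_of_real (1/4))"
    by (rule ev_intro[of "vec 4 (\<lambda>i. if i = 3 then 1 else 0)" 4 _ 3])
       (auto intro!: eq_vecI dest!: cases4 simp: C4_def scalar_prod_def atLeast0LessThan lessThan_nat_numeral)
  have t: "tr C4 = 1" by (simp add: tr_def C4_def lessThan_nat_numeral)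
  have "vn_entropy C4 = sum_list (map eta [3/4, 1/4])"
    by (rule vn_spec[OF psd_C4 t]) (use e1 e2 in auto)
  then show ?thesis by simp
qed

lemma target: "eta (3/4) + eta (1/4) = - (1/4) * log 2 (1/4) - (3/4) * log 2 (3/4)"
  by (simp add: eta_def)

lemma d24: "discord 2 4 rho1 = - (1/4) * log 2 (1/4) - (3/4) * log 2 (3/4)"
  using discord_pure[where dX=2 and dY=4 and \<phi>=psi1] psi1_norm[of 2 4]
  by (simp add: rho1_outer[symmetric] ptY24 vn_C2 target)

lemma d42: "discord 4 2 rho1 = - (1/4) * log 2 (1/4) - (3/4) * log 2 (3/4)"
  using discord_pure[where dX=4 and dY=2 and \<phi>=psi1] psi1_norm[of 4 2]
  by (simp add: rho1_outer[symmetric] ptY42 vn_C4 target)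


lemma idx_all: "\<forall>i<8. P i \<Longrightarrow> P 0 \<and> P 1 \<and> P 2 \<and> P 3 \<and> P 4 \<and> P 5 \<and> P 6 \<and> P (7::nat)" by simp
lemma all8: "P 0 \<Longrightarrow> P 1 \<Longrightarrow> P 2 \<Longrightarrow> P 3 \<Longrightarrow> P 4 \<Longrightarrow> P 5 \<Longrightarrow> P 6 \<Longrightarrow> P (7::nat) \<Longrightarrow> \<forall>i<8. P i"
  by (metis cases8)

lemma cq0: "compl_qubits 3 [0] = [1,2]" by (simp add: compl_qubits_def upt_rec)
lemma cq1: "compl_qubits 3 [1] = [0,2]" by (simp add: compl_qubits_def upt_rec)
lemma cq2: "compl_qubits 3 [2] = [0,1]" by (simp add: compl_qubits_def upt_rec)
lemma cq01: "compl_qubits 3 [0,1] = [2]" by (simp add: compl_qubits_def upt_rec)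
lemma cq02: "compl_qubits 3 [0,2] = [1]" by (simp add: compl_qubits_def upt_rec)
lemma cq12: "compl_qubits 3 [1,2] = [0]" by (simp add: compl_qubits_def upt_rec)

lemma r0: "regroup 3 [0] rho1 = rho1"
  by (rule regroup_rho1[where dY=4]) (unfold cq0, simp_all, rule all8, simp_all add: place_def lessThan_nat_numeral)

lemma qd0: "qdiscord 3 [0] rho1 = - (1/4) * log 2 (1/4) - (3/4) * log 2 (3/4)"
  unfolding qdiscord_def r0 by (simp add: d24)

lemma r1: "regroup 3 [1] rho1 = rho1"
  by (rule regroup_rho1[where dY=4]) (unfold cq1, simp_all, rule all8, simp_all add: place_def lessThan_nat_numeral)

lemma qd1: "qdiscord 3 [1] rho1 = - (1/4) * log 2 (1/4) - (3/4) * log 2 (3/4)"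
  unfolding qdiscord_def r1 by (simp add: d24)

lemma r2: "regroup 3 [2] rho1 = rho1"
  by (rule regroup_rho1[where dY=4]) (unfold cq2, simp_all, rule all8, simp_all add: place_def lessThan_nat_numeral)

lemma qd2: "qdiscord 3 [2] rho1 = - (1/4) * log 2 (1/4) - (3/4) * log 2 (3/4)"
  unfolding qdiscord_def r2 by (simp add: d24)

lemma r01: "regroup 3 [0,1] rho1 = rho1"
  by (rule regroup_rho1[where dY=2]) (unfold cq01, simp_all, rule all8, simp_all add: place_def lessThan_nat_numeral)

lemma qd01: "qdiscord 3 [0,1] rho1 = - (1/4) * log 2 (1/4) - (3/4) * log 2 (3/4)"
  unfolding qdiscord_def r01 by (simp add: d42)

lemma r02: "regroup 3 [0,2] rho1 = rho1"
  by (rule regroup_rho1[where dY=2]) (unfold cq02, simp_all, rule all8, simp_all add: place_def lessThan_nat_numeral)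

lemma qd02: "qdiscord 3 [0,2] rho1 = - (1/4) * log 2 (1/4) - (3/4) * log 2 (3/4)"
  unfolding qdiscord_def r02 by (simp add: d42)

lemma r12: "regroup 3 [1,2] rho1 = rho1"
  by (rule regroup_rho1[where dY=2]) (unfold cq12, simp_all, rule all8, simp_all add: place_def lessThan_nat_numeral)

lemma qd12: "qdiscord 3 [1,2] rho1 = - (1/4) * log 2 (1/4) - (3/4) * log 2 (3/4)"
  unfolding qdiscord_def r12 by (simp add: d42)

theorem lemma1:
  shows "qdiscord 3 [0] rho1 = - (1/4) * log 2 (1/4) - (3/4) * log 2 (3/4)
       \<and> qdiscord 3 [1] rho1 = - (1/4) * log 2 (1/4) - (3/4) * log 2 (3/4)
       \<and> qdiscord 3 [2] rho1 = - (1/4) * log 2 (1/4) - (3/4) * log 2 (3/4)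
       \<and> qdiscord 3 [0, 1] rho1 = - (1/4) * log 2 (1/4) - (3/4) * log 2 (3/4)
       \<and> qdiscord 3 [0, 2] rho1 = - (1/4) * log 2 (1/4) - (3/4) * log 2 (3/4)
       \<and> qdiscord 3 [1, 2] rho1 = - (1/4) * log 2 (1/4) - (3/4) * log 2 (3/4)"
  using qd0 qd1 qd2 qd01 qd02 qd12 by blast

end
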